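(* Let $(X,\mathbb{A},d)$ be a complete $C^*$-algebra valued metric space, where $\mathbb{A}$ is a unital $C^*$-algebra. Let $T,S:X\to X$ be mappings such that $$d(T^n x,S^n y)\preceq q(x,y)^n\,\delta(x,y)\quad\text{for all }x,y\in X,\ n\in\mathbb{N},$$ where $q:X\times X\to\acute{\mathbb{A}}_+$ satisfies $0\le\|q(x,y)\|<1$ for all $x,y\in X$ and $\delta:X\times X\to\mathbb{A}_+$ is a mapping. Then $T$ and $S$ are both orbitally continuous on $X$ if and only if $T$ and $S$ have a unique common fixed point in $X$.
   Context: $\mathbb{A}$ denotes a unital $C^*$-algebra with unit $I$ and zero $\theta$. An element $a\in\mathbb{A}$ is positive, written $a\succeq\theta$, if $a^*=a$ and its spectrum is contained in $[0,\infty)$; $\mathbb{A}_+$ is the set of positive elements, and $a\succeq b$ means $a-b\succeq\theta$. $\acute{\mathbb{A}}_+$ denotes the set of positive elements of $\mathbb{A}$ that commute with every element of $\mathbb{A}$. A $C^*$-algebra valued metric space $(X,\mathbb{A},d)$ is a nonempty set $X$ with $d:X\times X\to\mathbb{A}$ such that for all $x,y,z\in X$: $d(x,y)\succeq\theta$, with $d(x,y)=\theta$ iff $x=y$; $d(x,y)=d(y,x)$; $d(x,y)\preceq d(x,z)+d(z,y)$. A sequence $\{x_n\}$ converges to $x$ if $\|d(x_n,x)\|\to0$, and is Cauchy if $\|d(x_n,x_m)\|\to0$ as $n,m\to\infty$; the space is complete if every Cauchy sequence converges to a point of $X$. A self-map $T$ of $X$ is orbitally continuous at $u\in X$ if for every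 $x\in X$ and every increasing sequence of positive integers $\{n_i\}$, $\|d(T^{n_i}x,u)\|\to0$ implies $\|d(T^{n_i+1}x,Tu)\|\to0$ as $i\to\infty$; $T$ is orbitally continuous on $X$ if it is orbitally continuous at every $u\in X$. *)

theory Defs
  imports Complex_Main
begin

text \<open>A unital C*-algebra: a type 'a that is a real Banach algebra with unit (norm 1 = 1),
 together with an explicit complex scalar action sc extending the real one and an involution st.\<close>

definition unital_cstar_algebra :: "(complex \<Rightarrow> 'a::{real_normed_algebra_1,banach} \<Rightarrow> 'a) \<Rightarrow> ('a \<Rightarrow> 'a) \<Rightarrow> bool"
  where "unital_cstar_algebra sc st \<longleftrightarrow>
    (\<forall>(r::real) (x::'a). sc (complex_of_real r) x = scaleR r x) \<and>
    (\<forall>c d x. sc (c + d) x = sc c x + sc d x) \<and>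
    (\<forall>c x y. sc c (x + y) = sc c x + sc c y) \<and>
    (\<forall>c d x. sc (c * d) x = sc c (sc d x)) \<and>
    (\<forall>c x y. sc c (x * y) = sc c x * y \<and> sc c (x * y) = x * sc c y) \<and>
    (\<forall>c x. norm (sc c x) = cmod c * norm x) \<and>
    (\<forall>x y. st (x + y) = st x + st y) \<and>
    (\<forall>c x. st (sc c x) = sc (cnj c) (st x)) \<and>
    (\<forall>x y. st (x * y) = st y * st x) \<and>
    (\<forall>x. st (st x) = x) \<and>
    (\<forall>x. norm (st x * x) = norm x ^ 2)"

definition invertible_el :: "'a::ring_1 \<Rightarrow> bool"
  where "invertible_el a \<longleftrightarrow> (\<exists>b. a * b = 1 \<and> b * a = 1)"

definition spectrum_of :: "(complex \<Rightarrow> 'a \<Rightarrow> 'a) \<Rightarrow> 'a::ring_1 \<Rightarrow> complex set"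
  where "spectrum_of sc a = {z. \<not> invertible_el (a - sc z 1)}"

definition positive_el :: "(complex \<Rightarrow> 'a \<Rightarrow> 'a) \<Rightarrow> ('a \<Rightarrow> 'a) \<Rightarrow> 'a::ring_1 \<Rightarrow> bool"
  where "positive_el sc st a \<longleftrightarrow> st a = a \<and>
     spectrum_of sc a \<subseteq> {c. Im c = 0 \<and> Re c \<ge> 0}"

definition cle :: "(complex \<Rightarrow> 'a \<Rightarrow> 'a) \<Rightarrow> ('a \<Rightarrow> 'a) \<Rightarrow> 'a::ring_1 \<Rightarrow> 'a \<Rightarrow> bool"
  where "cle sc st a b \<longleftrightarrow> positive_el sc st (b - a)"

definition central_positive :: "(complex \<Rightarrow> 'a \<Rightarrow> 'a) \<Rightarrow> ('a \<Rightarrow> 'a) \<Rightarrow> 'a::ring_1 \<Rightarrow> bool"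
  where "central_positive sc st a \<longleftrightarrow> positive_el sc st a \<and> (\<forall>b. a * b = b * a)"

definition cstar_metric :: "(complex \<Rightarrow> 'a \<Rightarrow> 'a) \<Rightarrow> ('a \<Rightarrow> 'a) \<Rightarrow> ('x \<Rightarrow> 'x \<Rightarrow> 'a::ring_1) \<Rightarrow> bool"
  where "cstar_metric sc st d \<longleftrightarrow>
    (\<forall>x y. positive_el sc st (d x y)) \<and>
    (\<forall>x y. d x y = 0 \<longleftrightarrow> x = y) \<and>
    (\<forall>x y. d x y = d y x) \<and>
    (\<forall>x y z. cle sc st (d x y) (d x z + d z y))"

definition cstar_complete :: "('x \<Rightarrow> 'x \<Rightarrow> 'a::real_normed_vector) \<Rightarrow> bool"
  where "cstar_complete d \<longleftrightarrow>
    (\<forall>s::nat \<Rightarrow> 'x. (\<forall>e>0. \<exists>N. \<forall>n\<ge>N. \<forall>m\<ge>N. norm (d (s n) (s m)) < e) \<longrightarrow>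
        (\<exists>x. (\<lambda>n. norm (d (s n) x)) \<longlonglongrightarrow> 0))"

definition orbitally_continuous_at :: "('x \<Rightarrow> 'x \<Rightarrow> 'a::real_normed_vector) \<Rightarrow> ('x \<Rightarrow> 'x) \<Rightarrow> 'x \<Rightarrow> bool"
  where "orbitally_continuous_at d T u \<longleftrightarrow>
    (\<forall>x (ns::nat \<Rightarrow> nat). strict_mono ns \<longrightarrow>
       (\<lambda>i. norm (d ((T ^^ ns i) x) u)) \<longlonglongrightarrow> 0 \<longrightarrow>
       (\<lambda>i. norm (d ((T ^^ (ns i + 1)) x) (T u))) \<longlonglongrightarrow> 0)"

definition orbitally_continuous :: "('x \<Rightarrow> 'x \<Rightarrow> 'a::real_normed_vector) \<Rightarrow> ('x \<Rightarrow> 'x) \<Rightarrow> bool"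
  where "orbitally_continuous d T \<longleftrightarrow> (\<forall>u. orbitally_continuous_at d T u)"

end

theory Submission
  imports Defs "HOL-Analysis.Analysis"
begin

definition inv_el :: "'a::ring_1 \<Rightarrow> 'a" where
  "inv_el y = (SOME z. y * z = 1 \<and> z * y = 1)"

lemma inv_el: "invertible_el y \<Longrightarrow> y * inv_el y = 1 \<and> inv_el y * y = 1"
  unfolding invertible_el_def inv_el_def by (rule someI_ex)

lemma inv_el_unique: "y * z = 1 \<Longrightarrow> z * y = 1 \<Longrightarrow> inv_el y = z"
proof -
  assume a: "y * z = 1" "z * y = 1"
  then have i: "invertible_el y" unfolding invertible_el_def by blast
  have "inv_el y = (z * y) * inv_el y" using a by simp
  also have "\<dots> = z * (y * inv_el y)" by (simp add: mult.assoc)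
  also have "\<dots> = z" using inv_el[OF i] by simp
  finally show ?thesis .
qed

lemma invertible_mult: "invertible_el a \<Longrightarrow> invertible_el b \<Longrightarrow> invertible_el (a * b)"
proof -
  assume a: "invertible_el a" "invertible_el b"
  then obtain a' b' where "a * a' = 1" "a' * a = 1" "b * b' = 1" "b' * b = 1"
    unfolding invertible_el_def by blast
  then have "(a * b) * (b' * a') = 1" "(b' * a') * (a * b) = 1"
    by (simp_all add: mult.assoc) (metis mult.assoc mult_1_left)+
  then show ?thesis unfolding invertible_el_def by blast
qed

lemma invertible_minus: "invertible_el (- a) \<longleftrightarrow> invertible_el (a::'a::ring_1)"
  unfolding invertible_el_def by (metis minus_minus minus_mult_minus)

lemma neumann:
  fixes y :: "'a::{real_normed_algebra_1,banach}"
  assumes "norm y < 1"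
  shows "invertible_el (1 - y) \<and> norm (inv_el (1 - y)) \<le> 1 / (1 - norm y)"
proof -
  have sn: "summable (\<lambda>n. norm y ^ n)" using assms by simp
  have s: "summable (\<lambda>n. y ^ n)"
    by (rule summable_comparison_test[OF _ sn]) (auto intro: norm_power_ineq)
  define z where "z = suminf (\<lambda>n. y ^ n)"
  have e1: "y * z = z - 1"
  proof -
    have "y * z = (\<Sum>n. y * y ^ n)" unfolding z_def using suminf_mult[OF s] by simp
    also have "\<dots> = (\<Sum>n. y ^ Suc n)" by simp
    also have "\<dots> = z - 1" using suminf_split_head[OF s] unfolding z_def by simp
    finally show ?thesis .
  qed
  have e2: "z * y = z - 1"
  proof -
    have "z * y = (\<Sum>n. y ^ n * y)" unfolding z_def using suminf_mult2[OF s] by simp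
    also have "\<dots> = (\<Sum>n. y ^ Suc n)" by (simp add: power_commutes)
    also have "\<dots> = z - 1" using suminf_split_head[OF s] unfolding z_def by simp
    finally show ?thesis .
  qed
  have a: "(1 - y) * z = 1" "z * (1 - y) = 1" using e1 e2 by (simp_all add: algebra_simps)
  then have inv: "invertible_el (1 - y)" unfolding invertible_el_def by blast
  have "inv_el (1 - y) = z" using inv_el_unique[OF a] .
  moreover have "norm z \<le> 1 / (1 - norm y)"
  proof -
    have sn2: "summable (\<lambda>n. norm (y ^ n))"
      by (rule summable_comparison_test[OF _ sn]) (auto intro: norm_power_ineq)
    have "norm z \<le> (\<Sum>n. norm (y ^ n))" unfolding z_def
      by (rule summable_norm[OF sn2])
    also have "\<dots> \<le> (\<Sum>n. norm y ^ n)"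
      by (rule suminf_le[OF _ sn2 sn]) (auto intro: norm_power_ineq)
    also have "\<dots> = 1 / (1 - norm y)" using suminf_geometric[of "norm y"] assms by simp
    finally show ?thesis .
  qed
  ultimately show ?thesis using inv by simp
qed


locale cst =
  fixes sc :: "complex \<Rightarrow> 'a::{real_normed_algebra_1,banach} \<Rightarrow> 'a" and st :: "'a \<Rightarrow> 'a"
  assumes alg: "unital_cstar_algebra sc st"
begin

lemmas ax = alg[unfolded unital_cstar_algebra_def]
lemma sc_real: "sc (of_real r) x = r *\<^sub>R x" using ax by simp
lemma sc_add_l: "sc (c + d) x = sc c x + sc d x" using ax by simp
lemma sc_add_r: "sc c (x + y) = sc c x + sc c y" using ax by simp
lemma sc_mult: "sc (c * d) x = sc c (sc d x)" using ax by simp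
lemma sc_ml: "sc c (x * y) = sc c x * y" using ax by simp
lemma sc_mr: "sc c (x * y) = x * sc c y" using ax by metis
lemma sc_norm: "norm (sc c x) = cmod c * norm x" using ax by simp
lemma st_add: "st (x + y) = st x + st y" using ax by simp
lemma st_sc: "st (sc c x) = sc (cnj c) (st x)" using ax by simp
lemma st_mult: "st (x * y) = st y * st x" using ax by simp
lemma st_st: "st (st x) = x" using ax by simp
lemma cstar: "norm (st x * x) = norm x ^ 2" using ax by simp

lemma sc_one: "sc 1 x = x" using sc_real[of 1 x] by simp
lemma sc_zero: "sc 0 x = 0" using sc_real[of 0 x] by simp
lemma sc_zero_r: "sc c 0 = 0" using sc_add_r[of c 0 0] by simp
lemma sc_neg_l: "sc (- c) x = - sc c x"
  using sc_add_l[of c "-c" x] by (simp add: sc_zero eq_neg_iff_add_eq_0 add.commute)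
lemma sc_neg_r: "sc c (- x) = - sc c x"
  using sc_add_r[of c x "-x"] by (simp add: sc_zero_r eq_neg_iff_add_eq_0 add.commute)
lemma sc_diff_r: "sc c (x - y) = sc c x - sc c y"
  using sc_add_r[of c x "-y"] by (simp add: sc_neg_r)
lemma sc_diff_l: "sc (c - d) x = sc c x - sc d x"
  using sc_add_l[of c "-d" x] by (simp add: sc_neg_l)
lemma sc_1: "sc c x = sc c 1 * x" using sc_ml[of c 1 x] by simp
lemma sc_1': "sc c x = x * sc c 1" using sc_mr[of c x 1] by simp
lemma sc_one_real: "sc (of_real r) 1 = of_real r" using sc_real[of r 1] by (simp add: of_real_def)

lemma sc_power: "(sc \<mu> x) ^ n = sc (\<mu> ^ n) (x ^ n)"
proof (induction n)
  case 0 then show ?case by (simp add: sc_one)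
next
  case (Suc n)
  have "sc \<mu> x ^ Suc n = sc \<mu> x * sc (\<mu> ^ n) (x ^ n)" using Suc by simp
  also have "\<dots> = sc \<mu> (x * sc (\<mu> ^ n) (x ^ n))" by (simp add: sc_ml)
  also have "\<dots> = sc \<mu> (sc (\<mu> ^ n) (x * x ^ n))" by (simp add: sc_mr)
  also have "\<dots> = sc (\<mu> ^ Suc n) (x ^ Suc n)" by (simp add: sc_mult)
  finally show ?case .
qed

lemma st_one: "st 1 = 1"
proof -
  have "st 1 = st 1 * st (st 1)" by (simp add: st_st)
  also have "\<dots> = st (st 1 * 1)" by (simp only: st_mult)
  also have "\<dots> = 1" by (simp add: st_st)
  finally show ?thesis .
qed
lemma st_zero: "st 0 = 0" using st_add[of 0 0] by simp
lemma st_neg: "st (- x) = - st x" using st_add[of x "-x"] by (simp add: st_zero eq_neg_iff_add_eq_0 add.commute)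
lemma st_diff: "st (x - y) = st x - st y" using st_add[of x "-y"] by (simp add: st_neg)
lemma st_scaleR: "st (r *\<^sub>R x) = r *\<^sub>R st x"
  using st_sc[of "of_real r" x] by (simp add: sc_real)
lemma st_power: "st (x ^ n) = st x ^ n"
  by (induction n) (simp_all add: st_one st_mult power_Suc2[symmetric] power_commutes)

lemma cstar_sa: "st y = y \<Longrightarrow> norm (y * y) = norm y ^ 2" using cstar[of y] by simp

lemma pow2_norm: assumes "st y = y" shows "norm (y ^ (2 ^ m)) = norm y ^ (2 ^ m)"
proof (induction m)
  case 0 then show ?case by simp
next
  case (Suc m)
  have e: "y ^ (2 ^ Suc m) = y ^ (2 ^ m) * y ^ (2 ^ m)" by (simp add: power_add[symmetric] mult_2)
  have "st (y ^ (2 ^ m)) = y ^ (2 ^ m)" using assms by (simp add: st_power)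
  then have "norm (y ^ (2 ^ Suc m)) = norm (y ^ (2 ^ m)) ^ 2" unfolding e by (rule cstar_sa)
  also have "\<dots> = norm y ^ (2 ^ Suc m)" using Suc by (simp add: power_mult[symmetric] mult.commute)
  finally show ?case .
qed

lemma sc_inv_el: "c \<noteq> 0 \<Longrightarrow> invertible_el (sc c 1)"
  unfolding invertible_el_def
  by (rule exI[of _ "sc (1/c) 1"]) (simp add: sc_ml[symmetric] sc_mult[symmetric] sc_one)

lemma specb: assumes "norm c < cmod w" shows "invertible_el (c - sc w 1)"
proof -
  have w: "w \<noteq> 0" using assms norm_ge_zero[of c] by auto
  have n: "norm (sc (1/w) c) < 1" using assms w by (simp add: sc_norm norm_divide field_simps)
  have "c - sc w 1 = sc (- w) 1 * (1 - sc (1/w) c)"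
    using w by (simp add: algebra_simps sc_ml[symmetric] sc_mult[symmetric] sc_neg_l sc_one)
  moreover have "invertible_el (sc (- w) 1)" using w by (intro sc_inv_el) simp
  ultimately show ?thesis using neumann[OF n] invertible_mult by metis
qed

end

lemma scaleR_pow: "(r *\<^sub>R (y::'a::real_normed_algebra_1)) ^ k = r ^ k *\<^sub>R y ^ k"
  by (induction k) (simp_all add: mult_scaleR_left mult_scaleR_right)

lemma rel1:
  fixes Y :: "'a::{real_normed_algebra_1,banach}"
  assumes "invertible_el (1 - Y)" "norm Y \<le> 1/2"
  shows "norm (inv_el (1 - Y) - 1) \<le> 2 * norm Y"
proof -
  define G where "G = inv_el (1 - Y)"
  have "G * (1 - Y) = 1" using inv_el[OF assms(1)] unfolding G_def by simp
  then have "G - G * Y = 1" by (simp add: right_diff_distrib)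
  then have e: "G - 1 = G * Y" by (metis add.commute diff_eq_eq eq_diff_eq)
  have n1: "norm (G - 1) \<le> norm G * norm Y" unfolding e by (rule norm_mult_ineq)
  have n2: "norm G \<le> norm (G - 1) + 1" using norm_triangle_ineq[of "G - 1" 1] by simp
  have n3: "norm G * norm Y \<le> norm G / 2" using mult_left_mono[OF assms(2), of "norm G"] by simp
  have g: "norm G \<le> 2" using n1 n2 n3 by linarith
  have "norm G * norm Y \<le> 2 * norm Y" using g by (simp add: mult_right_mono)
  then show ?thesis using n1 unfolding G_def by linarith
qed

lemma rel2:
  fixes Y :: "'a::{real_normed_algebra_1,banach}"
  assumes "invertible_el (1 - Y)" "norm (inv_el (1 - Y) - 1) \<le> 1/2"
  shows "norm Y \<le> 2 * norm (inv_el (1 - Y) - 1)"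
proof -
  define G where "G = inv_el (1 - Y)"
  have "(1 - Y) * G = 1" using inv_el[OF assms(1)] unfolding G_def by simp
  then have "G - Y * G = 1" by (simp add: left_diff_distrib)
  then have "Y * G = G - 1" by (metis add.commute diff_eq_eq eq_diff_eq)
  then have e: "Y = (G - 1) - Y * (G - 1)" by (simp add: right_diff_distrib)
  have n1: "norm Y \<le> norm (G - 1) + norm (Y * (G - 1))" by (subst e) (rule norm_triangle_ineq4)
  have n2: "norm (Y * (G - 1)) \<le> norm Y * norm (G - 1)" by (rule norm_mult_ineq)
  have n3: "norm Y * norm (G - 1) \<le> norm Y / 2"
    using mult_left_mono[OF assms(2)[folded G_def], of "norm Y"] by simp
  show ?thesis using n1 n2 n3 unfolding G_def by linarith
qed

lemma root_m1: "\<exists>\<zeta>::complex. cmod \<zeta> = 1 \<and> \<zeta> ^ (2 ^ m) = - 1"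
proof -
  have "cis (pi / 2 ^ m) ^ (2 ^ m) = cis (real (2 ^ m) * (pi / 2 ^ m))" by (rule Complex.DeMoivre)
  also have "real (2 ^ m) * (pi / 2 ^ m) = pi" by simp
  finally show ?thesis by (intro exI[of _ "cis (pi / 2 ^ m)"]) simp
qed

lemma half_inv:
  fixes Y :: "'a::real_normed_algebra_1"
  assumes "invertible_el (1 - Y)" "invertible_el (1 + Y)"
  shows "inv_el (1 - Y * Y) = (1/2) *\<^sub>R (inv_el (1 - Y) + inv_el (1 + Y))"
proof (rule inv_el_unique)
  define A where "A = inv_el (1 - Y)"
  define B where "B = inv_el (1 + Y)"
  have A: "(1 - Y) * A = 1" "A * (1 - Y) = 1" using inv_el[OF assms(1)] A_def by auto
  have B: "(1 + Y) * B = 1" "B * (1 + Y) = 1" using inv_el[OF assms(2)] B_def by auto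
  have f1: "1 - Y * Y = (1 + Y) * (1 - Y)" by (simp add: algebra_simps)
  have f2: "1 - Y * Y = (1 - Y) * (1 + Y)" by (simp add: algebra_simps)
  have two: "(1 + Y) + (1 - Y) = (2::real) *\<^sub>R (1::'a)" by (simp add: scaleR_2)
  have "(1 - Y * Y) * A = 1 + Y" unfolding f1 by (simp add: mult.assoc A)
  moreover have "(1 - Y * Y) * B = 1 - Y" unfolding f2 by (simp add: mult.assoc B)
  ultimately have "(1 - Y * Y) * (A + B) = (2::real) *\<^sub>R 1" using two by (simp add: distrib_left)
  then show "(1 - Y * Y) * ((1/2) *\<^sub>R (A + B)) = 1" by (simp add: mult_scaleR_right)
  have "A * (1 - Y * Y) = 1 + Y" unfolding f2 by (simp add: mult.assoc[symmetric] A)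
  moreover have "B * (1 - Y * Y) = 1 - Y" unfolding f1 by (simp add: mult.assoc[symmetric] B)
  ultimately have "(A + B) * (1 - Y * Y) = (2::real) *\<^sub>R 1" using two by (simp add: distrib_right)
  then show "((1/2) *\<^sub>R (A + B)) * (1 - Y * Y) = 1" by (simp add: mult_scaleR_left)
qed

lemma pow2_lim: assumes "0 \<le> (c::real)" "c < 1" shows "(\<lambda>m. c ^ (2 ^ m)) \<longlonglongrightarrow> 0"
proof (rule Lim_null_comparison[OF _ LIMSEQ_power_zero[of c]])
  show "\<forall>\<^sub>F m in sequentially. norm (c ^ 2 ^ m) \<le> c ^ m"
  proof (rule always_eventually, rule allI)
    fix m :: nat
    have "m \<le> 2 ^ m" using less_exp[of m] by simp
    then show "norm (c ^ 2 ^ m) \<le> c ^ m" using assms by (simp add: power_decreasing)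
  qed
qed (use assms in simp)

context cst begin

lemma sc_real_pow: "(sc (of_real s) x) ^ n = s ^ n *\<^sub>R x ^ n"
  by (simp add: sc_real scaleR_pow)

end

context cst begin

lemma resolvent_cont:
  assumes H: "\<And>\<mu>. cmod \<mu> \<le> 1 \<Longrightarrow> invertible_el (1 - sc \<mu> x)"
  shows "continuous_on (cball 0 1) (\<lambda>\<mu>. inv_el (1 - sc \<mu> x))"
  unfolding continuous_on_iff
proof (intro ballI allI impI)
  fix \<mu> e assume \<mu>: "\<mu> \<in> cball (0::complex) 1" and e: "(0::real) < e"
  define F where "F \<nu> = inv_el (1 - sc \<nu> x)" for \<nu>
  define K where "K = norm (F \<mu>)"
  define L where "L = norm x * K"
  have K0: "K \<ge> 0" and L0: "L \<ge> 0" unfolding K_def L_def by simp_all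
  define d where "d = min (1 / (2 * (L + 1))) (e / (2 * (K + 1) * (L + 1)))"
  have d: "d > 0" unfolding d_def using K0 L0 e by simp
  show "\<exists>d>0. \<forall>\<nu>\<in>cball 0 1. dist \<nu> \<mu> < d \<longrightarrow> dist (inv_el (1 - sc \<nu> x)) (inv_el (1 - sc \<mu> x)) < e"
  proof (intro exI[of _ d] conjI d ballI impI)
    fix \<nu> assume \<nu>: "\<nu> \<in> cball (0::complex) 1" and dn: "dist \<nu> \<mu> < d"
    have i\<nu>: "F \<nu> * (1 - sc \<nu> x) = 1" using inv_el[OF H] \<nu> F_def by simp
    have i\<mu>: "(1 - sc \<mu> x) * F \<mu> = 1" using inv_el[OF H] \<mu> F_def by simp
    have "F \<nu> * ((1 - sc \<mu> x) - (1 - sc \<nu> x)) * F \<mu> = F \<nu> * ((1 - sc \<mu> x) * F \<mu>) - (F \<nu> * (1 - sc \<nu> x)) * F \<mu>"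
      by (simp only: right_diff_distrib left_diff_distrib mult.assoc)
    also have "\<dots> = F \<nu> - F \<mu>" using i\<nu> i\<mu> by simp
    finally have res: "F \<nu> - F \<mu> = F \<nu> * sc (\<nu> - \<mu>) x * F \<mu>"
      by (simp add: sc_diff_l)
    define E where "E = norm (F \<nu> - F \<mu>)"
    define c where "c = cmod (\<nu> - \<mu>)"
    define t where "t = c * L"
    have c0: "c \<ge> 0" unfolding c_def by simp
    have t0: "t \<ge> 0" unfolding t_def using c0 L0 by simp
    have "E \<le> norm (F \<nu> * sc (\<nu> - \<mu>) x) * norm (F \<mu>)" unfolding E_def res
      by (rule norm_mult_ineq)
    also have "\<dots> \<le> norm (F \<nu>) * norm (sc (\<nu> - \<mu>) x) * K" unfolding K_def
      by (intro mult_right_mono norm_mult_ineq) simp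
    also have "\<dots> = norm (F \<nu>) * t" unfolding t_def L_def c_def by (simp add: sc_norm)
    also have "\<dots> \<le> (K + E) * t" 
      using t0 norm_triangle_ineq[of "F \<nu> - F \<mu>" "F \<mu>"] unfolding E_def K_def
      by (intro mult_right_mono) (simp_all add: add.commute)
    finally have E1: "E \<le> (K + E) * t" .
    have dd: "c < d" using dn by (simp add: dist_norm c_def)
    have c1: "c * (2 * (L + 1)) < 1" using dd L0 unfolding d_def by (simp add: pos_less_divide_eq)
    have c2: "c * (2 * (K + 1) * (L + 1)) < e" using dd L0 K0 unfolding d_def
      by (simp add: pos_less_divide_eq)
    have "2 * t \<le> c * (2 * (L + 1))" unfolding t_def using c0 by (simp add: algebra_simps)
    then have t2: "t < 1/2" using c1 by simp
    have E0: "E \<ge> 0" unfolding E_def by simp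
    have "E * (1 - t) \<le> K * t" using E1 by (simp add: algebra_simps)
    moreover have "E * (1/2) \<le> E * (1 - t)" using t2 E0 by (intro mult_left_mono) simp_all
    ultimately have E2: "E \<le> 2 * K * t" by simp
    have "2 * K * t = c * (2 * K * L)" unfolding t_def by simp
    also have "\<dots> \<le> c * (2 * (K + 1) * (L + 1))" using c0 K0 L0
      by (intro mult_left_mono mult_mono) simp_all
    finally have "E < e" using E2 c2 by simp
    then show "dist (inv_el (1 - sc \<nu> x)) (inv_el (1 - sc \<mu> x)) < e"
      unfolding E_def F_def by (simp add: dist_norm)
  qed
qed

end

context cst begin

lemma neg_pow:
  assumes "\<zeta> ^ (2 ^ m) = -1"
  shows "(sc (\<zeta> * \<mu>) x) ^ (2 ^ m) = - ((sc \<mu> x) ^ (2 ^ m))"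
  unfolding sc_power using assms by (simp add: power_mult_distrib sc_neg_l)

lemma SR:
  assumes H: "\<And>\<mu>. cmod \<mu> \<le> 1 \<Longrightarrow> invertible_el (1 - sc \<mu> x)"
  shows "(\<lambda>m. x ^ (2 ^ m)) \<longlonglongrightarrow> 0"
proof -
  define D where "D = cball (0::complex) 1"
  define g where "g m \<mu> = inv_el (1 - (sc \<mu> x) ^ (2 ^ m))" for m \<mu>
  have "\<forall>m. \<exists>z::complex. cmod z = 1 \<and> z ^ (2 ^ m) = -1" using root_m1 by blast
  then obtain \<zeta> where \<zeta>: "\<And>m. cmod (\<zeta> m) = 1" "\<And>m. \<zeta> m ^ (2 ^ m) = -1" by metis
  have inv: "invertible_el (1 - (sc \<mu> x) ^ (2 ^ m))" if "cmod \<mu> \<le> 1" for m \<mu>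
    using that
  proof (induction m arbitrary: \<mu>)
    case 0 then show ?case using H by simp
  next
    case (Suc m)
    define Y where "Y = (sc \<mu> x) ^ (2 ^ m)"
    have e: "(sc \<mu> x) ^ (2 ^ Suc m) = Y * Y" unfolding Y_def by (simp add: power_add[symmetric] mult_2)
    have f: "1 - Y * Y = (1 - Y) * (1 - - Y)" by (simp add: algebra_simps)
    have i1: "invertible_el (1 - Y)" using Suc.IH[OF Suc.prems] Y_def by simp
    have "invertible_el (1 - (sc (\<zeta> m * \<mu>) x) ^ (2 ^ m))"
      using Suc.IH[of "\<zeta> m * \<mu>"] Suc.prems \<zeta>(1)[of m] by (simp add: norm_mult)
    then have i2: "invertible_el (1 - - Y)" unfolding neg_pow[OF \<zeta>(2)] Y_def .
    show ?case unfolding e f using invertible_mult[OF i1 i2] .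
  qed
  have rec: "g (Suc m) \<mu> = (1/2) *\<^sub>R (g m \<mu> + g m (\<zeta> m * \<mu>))" if "cmod \<mu> \<le> 1" for m \<mu>
  proof -
    define Y where "Y = (sc \<mu> x) ^ (2 ^ m)"
    have e: "(sc \<mu> x) ^ (2 ^ Suc m) = Y * Y" unfolding Y_def by (simp add: power_add[symmetric] mult_2)
    have i1: "invertible_el (1 - Y)" using inv[OF that] Y_def by simp
    have n: "cmod (\<zeta> m * \<mu>) \<le> 1" using that \<zeta>(1)[of m] by (simp add: norm_mult)
    have i2: "invertible_el (1 + Y)" using inv[OF n, of m] unfolding neg_pow[OF \<zeta>(2)] Y_def by simp
    have "g m (\<zeta> m * \<mu>) = inv_el (1 + Y)" unfolding g_def neg_pow[OF \<zeta>(2)] Y_def by simp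
    then show ?thesis unfolding g_def e using half_inv[OF i1 i2] Y_def by simp
  qed
  have g0: "g 0 = (\<lambda>\<mu>. inv_el (1 - sc \<mu> x))" unfolding g_def by auto
  have "uniformly_continuous_on D (g 0)" unfolding g0 D_def
    by (rule compact_uniformly_continuous[OF resolvent_cont]) (auto intro: H)
  then have uc: "\<forall>e>0. \<exists>d>0. \<forall>\<mu>\<in>D. \<forall>\<nu>\<in>D. dist \<nu> \<mu> < d \<longrightarrow> dist (g 0 \<nu>) (g 0 \<mu>) < e"
    unfolding uniformly_continuous_on_def .
  have equi: "\<exists>d>0. \<forall>m. \<forall>\<mu>\<in>D. \<forall>\<nu>\<in>D. dist \<nu> \<mu> < d \<longrightarrow> dist (g m \<nu>) (g m \<mu>) < e"
    if e: "e > 0" for e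
  proof -
    obtain d where d: "d > 0" "\<And>\<mu> \<nu>. \<mu>\<in>D \<Longrightarrow> \<nu>\<in>D \<Longrightarrow> dist \<nu> \<mu> < d \<Longrightarrow> dist (g 0 \<nu>) (g 0 \<mu>) < e"
      using uc e by metis
    have "\<forall>\<mu>\<in>D. \<forall>\<nu>\<in>D. dist \<nu> \<mu> < d \<longrightarrow> dist (g m \<nu>) (g m \<mu>) < e" for m
    proof (induction m)
      case 0 then show ?case using d by blast
    next
      case (Suc m)
      show ?case
      proof (intro ballI impI)
        fix \<mu> \<nu> assume \<mu>: "\<mu> \<in> D" and \<nu>: "\<nu> \<in> D" and dn: "dist \<nu> \<mu> < d"
        have m1: "cmod \<mu> \<le> 1" "cmod \<nu> \<le> 1" using \<mu> \<nu> D_def by auto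
        have z: "\<zeta> m * \<mu> \<in> D" "\<zeta> m * \<nu> \<in> D" using m1 \<zeta>(1)[of m] D_def by (auto simp: norm_mult)
        have dz: "dist (\<zeta> m * \<nu>) (\<zeta> m * \<mu>) < d" using dn \<zeta>(1)[of m]
          by (simp add: dist_norm right_diff_distrib[symmetric] norm_mult)
        have a: "dist (g m \<nu>) (g m \<mu>) < e" using Suc \<mu> \<nu> dn by blast
        have b: "dist (g m (\<zeta> m * \<nu>)) (g m (\<zeta> m * \<mu>)) < e" using Suc z dz by blast
        have "g (Suc m) \<nu> - g (Suc m) \<mu> = (1/2) *\<^sub>R ((g m \<nu> - g m \<mu>) + (g m (\<zeta> m * \<nu>) - g m (\<zeta> m * \<mu>)))"
          using rec m1 by (simp add: algebra_simps)
        then have "dist (g (Suc m) \<nu>) (g (Suc m) \<mu>) \<le> (1/2) * (dist (g m \<nu>) (g m \<mu>) + dist (g m (\<zeta> m * \<nu>)) (g m (\<zeta> m * \<mu>)))"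
          by (simp add: dist_norm norm_triangle_ineq)
        then show "dist (g (Suc m) \<nu>) (g (Suc m) \<mu>) < e" using a b by simp
      qed
    qed
    then show ?thesis using d(1) by blast
  qed
  define C where "C s \<longleftrightarrow> (\<lambda>m. s ^ (2 ^ m) *\<^sub>R x ^ (2 ^ m)) \<longlonglongrightarrow> 0" for s :: real
  have gr: "g m (of_real s) = inv_el (1 - s ^ (2 ^ m) *\<^sub>R x ^ (2 ^ m))" for m s
    unfolding g_def sc_real_pow ..
  have invr: "invertible_el (1 - s ^ (2 ^ m) *\<^sub>R x ^ (2 ^ m))" if "0 \<le> s" "s \<le> 1" for m s
    using inv[of "of_real s" m] that by (simp add: sc_real_pow)
  have conv1: "(\<lambda>m. g m (of_real s)) \<longlonglongrightarrow> 1" if s: "0 \<le> s" "s \<le> 1" "C s" for s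
  proof -
    have t: "(\<lambda>m. norm (s ^ (2 ^ m) *\<^sub>R x ^ (2 ^ m))) \<longlonglongrightarrow> 0"
      using s(3) unfolding C_def by (rule tendsto_norm_zero)
    have "eventually (\<lambda>m. norm (s ^ (2 ^ m) *\<^sub>R x ^ (2 ^ m)) < 1/2) sequentially"
      using order_tendstoD(2)[OF t, of "1/2"] by simp
    then have ev: "eventually (\<lambda>m. norm (g m (of_real s) - 1) \<le> 2 * norm (s ^ (2 ^ m) *\<^sub>R x ^ (2 ^ m))) sequentially"
      by eventually_elim (unfold gr, rule rel1[OF invr[OF s(1,2)]], simp)
    have "(\<lambda>m. 2 * norm (s ^ (2 ^ m) *\<^sub>R x ^ (2 ^ m))) \<longlonglongrightarrow> 0"
      using tendsto_mult_right_zero[OF t, of 2] by simp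
    then have "(\<lambda>m. g m (of_real s) - 1) \<longlonglongrightarrow> 0" by (rule Lim_null_comparison[OF ev])
    then show ?thesis by (simp add: LIM_zero_iff)
  qed
  have conv2: "C s" if s: "0 \<le> s" "s \<le> 1" "(\<lambda>m. g m (of_real s)) \<longlonglongrightarrow> 1" for s
  proof -
    have t0: "(\<lambda>m. g m (of_real s) - 1) \<longlonglongrightarrow> 0" using s(3) by (simp add: LIM_zero_iff)
    have t: "(\<lambda>m. norm (g m (of_real s) - 1)) \<longlonglongrightarrow> 0" using t0 by (rule tendsto_norm_zero)
    have "eventually (\<lambda>m. norm (g m (of_real s) - 1) < 1/2) sequentially"
      using order_tendstoD(2)[OF t, of "1/2"] by simp
    then have ev: "eventually (\<lambda>m. norm (s ^ (2 ^ m) *\<^sub>R x ^ (2 ^ m)) \<le> 2 * norm (g m (of_real s) - 1)) sequentially"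
      by eventually_elim (unfold gr, rule rel2[OF invr[OF s(1,2)]], simp)
    have "(\<lambda>m. 2 * norm (g m (of_real s) - 1)) \<longlonglongrightarrow> 0"
      using tendsto_mult_right_zero[OF t, of 2] by simp
    then show ?thesis unfolding C_def by (rule Lim_null_comparison[OF ev])
  qed
  have mono: "C s'" if "0 \<le> s'" "s' \<le> s" "C s" for s s'
    unfolding C_def
  proof (rule Lim_null_comparison[of _ "\<lambda>m. norm (s ^ (2 ^ m) *\<^sub>R x ^ (2 ^ m))"])
    show "\<forall>\<^sub>F m in sequentially. norm (s' ^ 2 ^ m *\<^sub>R x ^ 2 ^ m) \<le> norm (s ^ 2 ^ m *\<^sub>R x ^ 2 ^ m)"
      using that by (auto intro!: always_eventually mult_right_mono power_mono)
    show "(\<lambda>m. norm (s ^ 2 ^ m *\<^sub>R x ^ 2 ^ m)) \<longlonglongrightarrow> 0"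
      using that(3) unfolding C_def by (rule tendsto_norm_zero)
  qed
  define nn where "nn = norm x"
  have nx: "0 \<le> nn" unfolding nn_def by simp
  define s0 where "s0 = 1 / (2 * (nn + 1))"
  have s0: "0 < s0" "s0 \<le> 1" unfolding s0_def using nx by (simp_all add: divide_le_eq_1)
  have s0x: "s0 * norm x \<le> 1/2" unfolding s0_def nn_def[symmetric] using nx by (simp add: field_simps)
  have Cs0: "C s0" unfolding C_def
  proof (rule Lim_null_comparison[OF _ pow2_lim[of "1/2"]])
    show "\<forall>\<^sub>F m in sequentially. norm (s0 ^ 2 ^ m *\<^sub>R x ^ 2 ^ m) \<le> (1/2) ^ 2 ^ m"
    proof (rule always_eventually, rule allI)
      fix m :: nat
      have "norm (s0 ^ 2 ^ m *\<^sub>R x ^ 2 ^ m) \<le> s0 ^ 2 ^ m * norm x ^ 2 ^ m"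
        using s0 by (simp add: mult_left_mono norm_power_ineq)
      also have "\<dots> = (s0 * norm x) ^ 2 ^ m" by (simp add: power_mult_distrib)
      also have "\<dots> \<le> (1/2) ^ 2 ^ m" using s0x s0 by (intro power_mono) simp_all
      finally show "norm (s0 ^ 2 ^ m *\<^sub>R x ^ 2 ^ m) \<le> (1/2) ^ 2 ^ m" .
    qed
  qed simp_all
  define S where "S = {s. 0 \<le> s \<and> s \<le> 1 \<and> C s}"
  have s0S: "s0 \<in> S" using s0 Cs0 S_def by simp
  have ne: "S \<noteq> {}" using s0S by blast
  have bdd: "bdd_above S" unfolding S_def by (auto intro: bdd_aboveI[of _ 1])
  define ss where "ss = Sup S"
  have ss0: "s0 \<le> ss" unfolding ss_def using cSup_upper[OF s0S bdd] .
  have ss1: "ss \<le> 1" unfolding ss_def using ne by (intro cSup_least) (auto simp: S_def)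
  have ssp: "0 < ss" using ss0 s0 by simp
  have inD: "complex_of_real s \<in> D" if "0 \<le> s" "s \<le> 1" for s using that D_def by simp
  have "(\<lambda>m. g m (of_real ss)) \<longlonglongrightarrow> 1"
  proof (rule LIMSEQ_I)
    fix r :: real assume r: "0 < r"
    obtain d where d: "d > 0" "\<forall>m. \<forall>\<mu>\<in>D. \<forall>\<nu>\<in>D. dist \<nu> \<mu> < d \<longrightarrow> dist (g m \<nu>) (g m \<mu>) < r/2"
      using equi[of "r/2"] r by auto
    have "ss - d < ss" using d by simp
    then obtain s where s: "s \<in> S" "ss - d < s" using less_cSup_iff[OF ne bdd] ss_def by auto
    have sle: "s \<le> ss" unfolding ss_def using cSup_upper[OF s(1) bdd] .
    have sS: "0 \<le> s" "s \<le> 1" "C s" using s(1) S_def by auto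
    obtain no where no: "\<forall>n\<ge>no. norm (g n (of_real s) - 1) < r/2"
      using LIMSEQ_D[OF conv1[OF sS], of "r/2"] r by auto
    have dd: "dist (complex_of_real ss) (of_real s) < d" using sle s(2)
      by (simp add: dist_norm of_real_diff[symmetric] norm_of_real del: of_real_diff)
    have "norm (g n (of_real ss) - 1) < r" if "n \<ge> no" for n
    proof -
      have a: "dist (g n (of_real ss)) (g n (of_real s)) < r/2"
        using d(2) inD[OF sS(1,2)] inD ssp ss1 dd by simp
      have "norm (g n (of_real ss) - 1) \<le> dist (g n (of_real ss)) (g n (of_real s)) + norm (g n (of_real s) - 1)"
        using norm_triangle_ineq[of "g n (of_real ss) - g n (of_real s)" "g n (of_real s) - 1"]
        by (simp add: dist_norm)
      moreover have "norm (g n (of_real s) - 1) < r/2" using no that by blast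
      ultimately show ?thesis using a by linarith
    qed
    then show "\<exists>no. \<forall>n\<ge>no. norm (g n (of_real ss) - 1) < r" by blast
  qed
  then have Css: "C ss" using conv2 ssp ss1 by simp
  have "ss = 1"
  proof (rule ccontr)
    assume "ss \<noteq> 1"
    then have lt: "ss < 1" using ss1 by simp
    obtain m0 where m0: "norm (ss ^ (2 ^ m0) *\<^sub>R x ^ (2 ^ m0) - 0) < 1/2"
      using LIMSEQ_D[OF Css[unfolded C_def], of "1/2"] by auto
    define N where "N = (2::nat) ^ m0"
    have N0: "0 < N" unfolding N_def by simp
    define t where "t = root N (3/2)"
    have tN: "t ^ N = 3/2" unfolding t_def using real_root_pow_pos[OF N0] by simp
    have t1: "1 < t" unfolding t_def using N0 by simp
    define s' where "s' = ss * t"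
    have bound: "norm (s' ^ (2 ^ (k + m0)) *\<^sub>R x ^ (2 ^ (k + m0))) \<le> (3/4) ^ (2 ^ k)" for k
    proof -
      define Y where "Y = ss ^ N *\<^sub>R x ^ N"
      have nY: "norm Y \<le> 1/2" using m0 Y_def N_def by simp
      have p: "(2::nat) ^ (k + m0) = N * 2 ^ k" unfolding N_def by (simp add: power_add)
      have "s' ^ (2 ^ (k + m0)) *\<^sub>R x ^ (2 ^ (k + m0)) = (t ^ N) ^ (2 ^ k) *\<^sub>R (Y ^ (2 ^ k))"
        unfolding s'_def p Y_def by (simp add: scaleR_pow power_mult power_mult_distrib)
      then have "norm (s' ^ (2 ^ (k + m0)) *\<^sub>R x ^ (2 ^ (k + m0))) = (3/2) ^ (2 ^ k) * norm (Y ^ (2 ^ k))"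
        using tN by simp
      also have "\<dots> \<le> (3/2) ^ (2 ^ k) * (1/2) ^ (2 ^ k)"
        using nY by (intro mult_left_mono order_trans[OF norm_power_ineq] power_mono) simp_all
      also have "\<dots> = (3/4) ^ (2 ^ k)" by (simp add: power_mult_distrib[symmetric])
      finally show ?thesis .
    qed
    have "(\<lambda>k. s' ^ (2 ^ (k + m0)) *\<^sub>R x ^ (2 ^ (k + m0))) \<longlonglongrightarrow> 0"
      by (rule Lim_null_comparison[OF always_eventually pow2_lim[of "3/4"]]) (use bound in auto)
    then have Cs': "C s'" unfolding C_def by (rule LIMSEQ_offset)
    define s'' where "s'' = min 1 s'"
    have gt: "ss < s''" unfolding s''_def s'_def using lt ssp t1 by simp
    have "C s''" by (rule mono[OF _ _ Cs']) (use ssp t1 in \<open>auto simp: s''_def s'_def\<close>)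
    then have "s'' \<in> S" unfolding S_def s''_def using ssp t1 s'_def by auto
    then have "s'' \<le> ss" unfolding ss_def by (rule cSup_upper[OF _ bdd])
    then show False using gt by simp
  qed
  then show ?thesis using Css unfolding C_def by simp
qed

end

context cst begin

lemma normspec:
  assumes sa: "st a = a" and r0: "0 \<le> r"
    and H: "\<And>z. r < cmod z \<Longrightarrow> invertible_el (a - sc z 1)"
  shows "norm a \<le> r"
proof (rule ccontr)
  assume "\<not> norm a \<le> r"
  then have ar: "r < norm a" by simp
  define r' where "r' = (r + norm a) / 2"
  have r': "r < r'" "r' < norm a" "0 < r'" using ar r0 unfolding r'_def by auto
  define x where "x = (1 / r') *\<^sub>R a"
  have inv: "invertible_el (1 - sc \<mu> x)" if "cmod \<mu> \<le> 1" for \<mu>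
  proof (cases "\<mu> = 0")
    case True then show ?thesis unfolding invertible_el_def by (intro exI[of _ 1]) (simp add: sc_zero)
  next
    case False
    have cm: "0 < cmod \<mu>" using False by simp
    have "r' \<le> r' / cmod \<mu>" using cm that r' by (simp add: le_divide_eq mult_left_le)
    moreover have "cmod (of_real r' / \<mu>) = r' / cmod \<mu>" using r' by (simp add: norm_divide)
    ultimately have z: "r < cmod (of_real r' / \<mu>)" using r' by simp
    have i1: "invertible_el (a - sc (of_real r' / \<mu>) 1)" using H[OF z] .
    have i2: "invertible_el (sc (- \<mu> / of_real r') 1)" using False r' by (intro sc_inv_el) simp
    have "sc (- \<mu> / of_real r') 1 * (a - sc (of_real r' / \<mu>) 1)
        = sc (- \<mu> / of_real r') a - sc ((- \<mu> / of_real r') * (of_real r' / \<mu>)) 1"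
      by (simp only: right_diff_distrib) (metis sc_ml mult_1_left sc_mult)
    also have "(- \<mu> / of_real r') * (of_real r' / \<mu>) = -1" using False r' by (simp add: field_simps)
    also have "sc (- \<mu> / of_real r') a = - sc \<mu> x"
    proof -
      have e1: "sc \<mu> x = sc (\<mu> * of_real (1 / r')) a" unfolding x_def by (simp only: sc_mult sc_real)
      have e2: "\<mu> * of_real (1 / r') = \<mu> / of_real r'" by (simp add: divide_inverse)
      have e3: "- \<mu> / of_real r' = - (\<mu> / of_real r')" by simp
      show ?thesis unfolding e3 sc_neg_l e1 e2 ..
    qed
    finally have "sc (- \<mu> / of_real r') 1 * (a - sc (of_real r' / \<mu>) 1) = 1 - sc \<mu> x"
      by (simp add: sc_neg_l sc_one)
    then show ?thesis using invertible_mult[OF i2 i1] by simp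
  qed
  have lim: "(\<lambda>m. x ^ (2 ^ m)) \<longlonglongrightarrow> 0" by (rule SR) (rule inv)
  have sx: "st x = x" unfolding x_def by (simp add: st_scaleR sa)
  have nx: "1 < norm x" unfolding x_def using r' by (simp add: field_simps)
  obtain no where "norm (x ^ (2 ^ no) - 0) < 1" using LIMSEQ_D[OF lim, of 1] by auto
  moreover have "1 \<le> norm x ^ (2 ^ no)" using nx by (simp add: one_le_power)
  ultimately show False using pow2_norm[OF sx, of no] by simp
qed

lemma positive_spec:
  assumes "positive_el sc st c" "\<not> invertible_el (c - sc w 1)"
  shows "Im w = 0 \<and> 0 \<le> Re w \<and> cmod w \<le> norm c"
proof -
  have "w \<in> spectrum_of sc c" using assms(2) unfolding spectrum_of_def by simp
  then have "Im w = 0 \<and> 0 \<le> Re w" using assms(1) unfolding positive_el_def by auto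
  moreover have "cmod w \<le> norm c" using specb assms(2) by (meson not_le)
  ultimately show ?thesis by simp
qed

lemma Kpos:
  assumes pc: "positive_el sc st c"
  shows "norm (norm c *\<^sub>R 1 - c) \<le> norm c"
proof (rule normspec)
  have sc_c: "st c = c" using pc unfolding positive_el_def by simp
  show "st (norm c *\<^sub>R 1 - c) = norm c *\<^sub>R 1 - c" by (simp add: st_diff st_scaleR st_one sc_c)
  show "0 \<le> norm c" by simp
  fix z assume z: "norm c < cmod z"
  define s where "s = norm c"
  define w where "w = of_real s - z"
  have e: "s *\<^sub>R 1 - c - sc z 1 = - (c - sc w 1)"
    unfolding w_def by (simp add: sc_diff_l sc_real)
  show "invertible_el (norm c *\<^sub>R 1 - c - sc z 1)"
  proof (rule ccontr)
    assume "\<not> ?thesis"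
    then have "\<not> invertible_el (c - sc w 1)" using e invertible_minus s_def by metis
    from positive_spec[OF pc this] have w: "Im w = 0" "0 \<le> Re w" "cmod w \<le> s" unfolding s_def by auto
    have "Re w \<le> s" using w(3) complex_Re_le_cmod[of w] by linarith
    have zz: "z = of_real (s - Re w)" using w(1) unfolding w_def by (simp add: complex_eq_iff)
    have "cmod z = \<bar>s - Re w\<bar>" unfolding zz by (simp only: norm_of_real)
    then have "cmod z \<le> s" using w(2) \<open>Re w \<le> s\<close> by simp
    then show False using z s_def by simp
  qed
qed

lemma norm_mono_pos:
  assumes pa: "positive_el sc st a" and pc: "positive_el sc st (b - a)"
  shows "norm a \<le> norm b"
proof (rule normspec)
  show "st a = a" using pa unfolding positive_el_def by simp
  show "0 \<le> norm b" by simp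
  fix z assume z: "norm b < cmod z"
  show "invertible_el (a - sc z 1)"
  proof (rule ccontr)
    assume ni: "\<not> ?thesis"
    from positive_spec[OF pa ni] have zr: "Im z = 0" "0 \<le> Re z" by auto
    define l where "l = Re z"
    have zl: "z = of_real l" unfolding l_def using zr(1) by (simp add: complex_eq_iff)
    have "cmod z = \<bar>Re z\<bar>" using zr(1) by (simp add: cmod_eq_Re)
    then have lb: "norm b < l" using zr(2) z unfolding l_def by simp
    define c where "c = b - a"
    define s where "s = norm c"
    have s0: "0 \<le> s" unfolding s_def by simp
    define Cc where "Cc = s *\<^sub>R 1 - c"
    have nC: "norm Cc \<le> s" unfolding Cc_def s_def c_def using Kpos[OF pc] .
    define y where "y = (1 / (l + s)) *\<^sub>R b"
    have ls: "0 < l + s" using lb s0 norm_ge_zero[of b] by linarith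
    have ny: "norm y = norm b / (l + s)" unfolding y_def using ls by simp
    have ny1: "norm y < 1" unfolding ny using ls lb s0 by (simp add: divide_less_eq)
    from neumann[OF ny1] have iy: "invertible_el (1 - y)" and niy: "norm (inv_el (1 - y)) \<le> 1 / (1 - norm y)"
      by auto
    define B where "B = (l + s) *\<^sub>R 1 - b"
    define Bi where "Bi = (1 / (l + s)) *\<^sub>R inv_el (1 - y)"
    have By: "B = (l + s) *\<^sub>R (1 - y)" unfolding B_def y_def using ls by (simp add: scaleR_diff_right)
    have B1: "B * Bi = 1" "Bi * B = 1" unfolding By Bi_def using inv_el[OF iy] ls by simp_all
    have nBi: "norm Bi \<le> 1 / (l + s - norm b)"
    proof -
      have "norm Bi = norm (inv_el (1 - y)) / (l + s)" unfolding Bi_def using ls by simp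
      also have "\<dots> \<le> (1 / (1 - norm y)) / (l + s)" using divide_right_mono[OF niy, of "l + s"] ls by simp
      also have "\<dots> = 1 / (l + s - norm b)"
      proof -
        have p0: "l + s - norm b \<noteq> 0" using lb s0 by simp
        have "1 - norm b / (l + s) = (l + s - norm b) / (l + s)" using ls by (simp add: diff_divide_distrib)
        then show ?thesis unfolding ny using ls p0 by simp
      qed
      finally show ?thesis .
    qed
    define Z where "Z = Bi * Cc"
    have nZ: "norm Z < 1"
    proof -
      have p: "0 < l + s - norm b" using lb s0 by simp
      have "norm Z \<le> norm Bi * norm Cc" unfolding Z_def by (rule norm_mult_ineq)
      also have "\<dots> \<le> 1 / (l + s - norm b) * s" using nBi nC p by (intro mult_mono) simp_all
      also have "\<dots> < 1" using p lb by (simp add: field_simps)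
      finally show ?thesis .
    qed
    have iZ: "invertible_el (1 - Z)" using neumann[OF nZ] by simp
    have iB: "invertible_el B" unfolding invertible_el_def using B1 by blast
    have "B * (1 - Z) = B - Cc" unfolding Z_def by (simp add: right_diff_distrib mult.assoc[symmetric] B1)
    also have "B - Cc = l *\<^sub>R 1 - a" unfolding B_def Cc_def c_def
      by (simp add: scaleR_add_left)
    also have "\<dots> = - (a - sc z 1)" unfolding zl by (simp add: sc_real)
    finally have "invertible_el (- (a - sc z 1))" using invertible_mult[OF iB iZ] by metis
    then show False using ni invertible_minus by blast
  qed
qed

end

lemma cauchy_geom:
  fixes N :: "'x \<Rightarrow> 'x \<Rightarrow> real" and t :: "nat \<Rightarrow> 'x"
  assumes tri: "\<And>x y z. N x y \<le> N x z + N z y" and sym: "\<And>x y. N x y = N y x" and refl: "\<And>x. N x x = 0"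
    and step: "\<And>n. n \<ge> 1 \<Longrightarrow> N (t n) (t (Suc n)) \<le> C * \<gamma> ^ n"
    and C0: "0 \<le> C" and g0: "0 \<le> \<gamma>" and g1: "\<gamma> < 1"
  shows "\<forall>e>0. \<exists>M. \<forall>n\<ge>M. \<forall>m\<ge>M. N (t n) (t m) < e"
proof -
  have sumb: "N (t n) (t (n + k)) \<le> (\<Sum>i<k. C * \<gamma> ^ (n + i))" if "n \<ge> 1" for n k
  proof (induction k)
    case 0 then show ?case using refl by simp
  next
    case (Suc k)
    have "N (t n) (t (n + Suc k)) \<le> N (t n) (t (n + k)) + N (t (n + k)) (t (Suc (n + k)))"
      using tri by simp
    also have "\<dots> \<le> (\<Sum>i<k. C * \<gamma> ^ (n + i)) + C * \<gamma> ^ (n + k)"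
      using Suc step[of "n + k"] that by (intro add_mono) simp_all
    finally show ?case by simp
  qed
  have geo: "(\<Sum>i<k. C * \<gamma> ^ (n + i)) \<le> C * \<gamma> ^ n / (1 - \<gamma>)" for n k
  proof -
    have "(\<Sum>i<k. C * \<gamma> ^ (n + i)) = C * \<gamma> ^ n * (\<Sum>i<k. \<gamma> ^ i)"
      by (simp add: sum_distrib_left power_add mult.assoc)
    also have "(\<Sum>i<k. \<gamma> ^ i) = (1 - \<gamma> ^ k) / (1 - \<gamma>)" using g1 by (simp add: sum_gp_strict)
    also have "\<dots> \<le> 1 / (1 - \<gamma>)" using g0 g1 by (simp add: divide_right_mono)
    finally show ?thesis using C0 g0 by (simp add: mult_left_mono)
  qed
  have lim: "(\<lambda>n. C * \<gamma> ^ n / (1 - \<gamma>)) \<longlonglongrightarrow> 0"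
    using g0 g1 by (intro tendsto_divide_zero tendsto_mult_right_zero LIMSEQ_power_zero) simp
  show ?thesis
  proof (intro allI impI)
    fix e :: real assume e: "e > 0"
    obtain M0 where M0: "\<forall>n\<ge>M0. norm (C * \<gamma> ^ n / (1 - \<gamma>) - 0) < e" using LIMSEQ_D[OF lim e] by blast
    define M where "M = max 1 M0"
    have b: "N (t n) (t m) < e" if "n \<ge> M" "m \<ge> n" for n m
    proof -
      have "N (t n) (t (n + (m - n))) \<le> C * \<gamma> ^ n / (1 - \<gamma>)"
        using sumb[of n "m - n"] geo[of n "m - n"] that M_def by simp
      moreover have "C * \<gamma> ^ n / (1 - \<gamma>) < e" using M0 that M_def g0 g1 C0 by simp
      ultimately show ?thesis using that by simp
    qed
    show "\<exists>M. \<forall>n\<ge>M. \<forall>m\<ge>M. N (t n) (t m) < e"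
    proof (intro exI[of _ M] allI impI)
      fix n m assume "n \<ge> M" "m \<ge> M"
      then show "N (t n) (t m) < e" using b sym by (cases "n \<le> m") (auto, metis b nle_le)
    qed
  qed
qed


theorem theorem3p16:
  fixes sc :: "complex \<Rightarrow> 'a::{real_normed_algebra_1,banach} \<Rightarrow> 'a"
    and st :: "'a \<Rightarrow> 'a"
    and d :: "'x \<Rightarrow> 'x \<Rightarrow> 'a"
    and T S :: "'x \<Rightarrow> 'x"
    and q \<delta> :: "'x \<Rightarrow> 'x \<Rightarrow> 'a"
  assumes alg: "unital_cstar_algebra sc st"
    and met: "cstar_metric sc st d"
    and compl: "cstar_complete d"
    and q_pos: "\<forall>x y. central_positive sc st (q x y)"
    and q_norm: "\<forall>x y. norm (q x y) < 1"
    and delta_pos: "\<forall>x y. positive_el sc st (\<delta> x y)"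
    and contr: "\<forall>x y (n::nat). n \<ge> 1 \<longrightarrow>
         cle sc st (d ((T ^^ n) x) ((S ^^ n) y)) (q x y ^ n * \<delta> x y)"
  shows "(orbitally_continuous d T \<and> orbitally_continuous d S) \<longleftrightarrow>
         (\<exists>!u. T u = u \<and> S u = u)"
proof -
  interpret cst sc st by (rule cst.intro[OF alg])
  define N where "N x y = norm (d x y)" for x y
  have dpos: "\<And>x y. positive_el sc st (d x y)" using met unfolding cstar_metric_def by blast
  have deq: "\<And>x y. d x y = 0 \<longleftrightarrow> x = y" using met unfolding cstar_metric_def by blast
  have dsym: "\<And>x y. d x y = d y x" using met unfolding cstar_metric_def by blast
  have dtri: "\<And>x y z. cle sc st (d x y) (d x z + d z y)" using met unfolding cstar_metric_def by blast
  have tri: "N x y \<le> N x z + N z y" for x y z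
  proof -
    have "N x y \<le> norm (d x z + d z y)" unfolding N_def
      using norm_mono_pos[OF dpos dtri[unfolded cle_def]] .
    also have "\<dots> \<le> N x z + N z y" unfolding N_def by (rule norm_triangle_ineq)
    finally show ?thesis .
  qed
  have Nsym: "N x y = N y x" for x y unfolding N_def using dsym by simp
  have N0: "N x x = 0" for x unfolding N_def using deq by simp
  have Nz: "N x y = 0 \<Longrightarrow> x = y" for x y unfolding N_def using deq by simp
  have Nnn: "0 \<le> N x y" for x y unfolding N_def by simp
  have Nn: "N ((T^^n) x) ((S^^n) y) \<le> norm (q x y) ^ n * norm (\<delta> x y)" if "n \<ge> 1" for n x y
  proof -
    have "N ((T^^n) x) ((S^^n) y) \<le> norm (q x y ^ n * \<delta> x y)" unfolding N_def
      using norm_mono_pos[OF dpos] contr that unfolding cle_def by blast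
    also have "\<dots> \<le> norm (q x y ^ n) * norm (\<delta> x y)" by (rule norm_mult_ineq)
    also have "\<dots> \<le> norm (q x y) ^ n * norm (\<delta> x y)"
      by (intro mult_right_mono norm_power_ineq) simp
    finally show ?thesis .
  qed
  have Nlim: "(\<lambda>n. N ((T^^n) x) ((S^^n) y)) \<longlonglongrightarrow> 0" for x y
  proof (rule Lim_null_comparison)
    show "\<forall>\<^sub>F n in sequentially. norm (N ((T^^n) x) ((S^^n) y)) \<le> norm (q x y) ^ n * norm (\<delta> x y)"
      by (rule eventually_sequentiallyI[of 1]) (simp add: Nn abs_of_nonneg Nnn)
    show "(\<lambda>n. norm (q x y) ^ n * norm (\<delta> x y)) \<longlonglongrightarrow> 0"
      using q_norm by (intro tendsto_mult_left_zero LIMSEQ_power_zero) simp_all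
  qed
  have unique: "u = v" if "(\<lambda>n. N (s n) u) \<longlonglongrightarrow> 0" "(\<lambda>n. N (s n) v) \<longlonglongrightarrow> 0" for s u v
  proof -
    have "(\<lambda>n. N (s n) u + N (s n) v) \<longlonglongrightarrow> 0" using tendsto_add[OF that] by simp
    moreover have "\<forall>n\<ge>0. N u v \<le> N (s n) u + N (s n) v" using tri Nsym by metis
    ultimately have "N u v \<le> 0" using LIMSEQ_le_const by blast
    then show ?thesis using Nnn[of u v] Nz by simp
  qed
  have const0: "c = 0" if "(\<lambda>n. c) \<longlonglongrightarrow> (0::real)" for c
    using that LIMSEQ_const_iff by blast
  show ?thesis
  proof
    assume oc: "orbitally_continuous d T \<and> orbitally_continuous d S"
    define x0 :: 'x where "x0 = undefined"
    have ocT: "\<And>x ns. strict_mono ns \<Longrightarrow> (\<lambda>i. N ((T ^^ ns i) x) u) \<longlonglongrightarrow> 0 \<Longrightarrow>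
       (\<lambda>i. N ((T ^^ (ns i + 1)) x) (T u)) \<longlonglongrightarrow> 0" for u
      using oc unfolding orbitally_continuous_def orbitally_continuous_at_def N_def by blast
    have ocS: "\<And>x ns. strict_mono ns \<Longrightarrow> (\<lambda>i. N ((S ^^ ns i) x) u) \<longlonglongrightarrow> 0 \<Longrightarrow>
       (\<lambda>i. N ((S ^^ (ns i + 1)) x) (S u)) \<longlonglongrightarrow> 0" for u
      using oc unfolding orbitally_continuous_def orbitally_continuous_at_def N_def by blast
    have conv: "\<exists>u. (\<lambda>n. N (t n) u) \<longlonglongrightarrow> 0" if "\<forall>e>0. \<exists>M. \<forall>n\<ge>M. \<forall>m\<ge>M. N (t n) (t m) < e" for t
      using compl that unfolding cstar_complete_def N_def by blast
    define A1 where "A1 = norm (\<delta> x0 x0)"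
    define A2 where "A2 = norm (\<delta> (T x0) x0)"
    define A3 where "A3 = norm (\<delta> x0 (S x0))"
    define g where "g = max (norm (q x0 x0)) (max (norm (q (T x0) x0)) (norm (q x0 (S x0))))"
    have g0: "0 \<le> g" unfolding g_def by (simp add: le_max_iff_disj)
    have g1: "g < 1" unfolding g_def using q_norm by simp
    have pw1: "norm (q x0 x0) ^ n * c \<le> g ^ n * c" if "c \<ge> 0" for n c
      unfolding g_def using that by (intro mult_right_mono power_mono) auto
    have pw2: "norm (q (T x0) x0) ^ n * c \<le> g ^ n * c" if "c \<ge> 0" for n c
      unfolding g_def using that by (intro mult_right_mono power_mono) auto
    have pw3: "norm (q x0 (S x0)) ^ n * c \<le> g ^ n * c" if "c \<ge> 0" for n c
      unfolding g_def using that by (intro mult_right_mono power_mono) auto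
    have CT: "\<forall>e>0. \<exists>M. \<forall>n\<ge>M. \<forall>m\<ge>M. N ((T^^n) x0) ((T^^m) x0) < e"
    proof (rule cauchy_geom[where C = "A1 + A2" and \<gamma> = g, OF tri Nsym N0 _ _ g0 g1])
      fix n :: nat assume n: "n \<ge> 1"
      have e: "(T^^Suc n) x0 = (T^^n) (T x0)" by (simp only: funpow_Suc_right o_def)
      have "N ((T^^n) x0) ((T^^Suc n) x0) \<le> N ((T^^n) x0) ((S^^n) x0) + N ((S^^n) x0) ((T^^n) (T x0))"
        unfolding e by (rule tri)
      also have "\<dots> \<le> g ^ n * A1 + g ^ n * A2"
      proof (rule add_mono)
        show "N ((T^^n) x0) ((S^^n) x0) \<le> g ^ n * A1" unfolding A1_def
          using Nn[OF n, of x0 x0] pw1[of "norm (\<delta> x0 x0)" n] by simp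
        show "N ((S^^n) x0) ((T^^n) (T x0)) \<le> g ^ n * A2" unfolding A2_def
          using Nn[OF n, of "T x0" x0] pw2[of "norm (\<delta> (T x0) x0)" n] Nsym by (metis order_trans norm_ge_zero)
      qed
      finally show "N ((T^^n) x0) ((T^^Suc n) x0) \<le> (A1 + A2) * g ^ n" by (simp add: algebra_simps)
    qed (simp_all add: A1_def A2_def)
    have CS: "\<forall>e>0. \<exists>M. \<forall>n\<ge>M. \<forall>m\<ge>M. N ((S^^n) x0) ((S^^m) x0) < e"
    proof (rule cauchy_geom[where C = "A1 + A3" and \<gamma> = g, OF tri Nsym N0 _ _ g0 g1])
      fix n :: nat assume n: "n \<ge> 1"
      have e: "(S^^Suc n) x0 = (S^^n) (S x0)" by (simp only: funpow_Suc_right o_def)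
      have "N ((S^^n) x0) ((S^^Suc n) x0) \<le> N ((S^^n) x0) ((T^^n) x0) + N ((T^^n) x0) ((S^^n) (S x0))"
        unfolding e by (rule tri)
      also have "\<dots> \<le> g ^ n * A1 + g ^ n * A3"
      proof (rule add_mono)
        show "N ((S^^n) x0) ((T^^n) x0) \<le> g ^ n * A1" unfolding A1_def
          using Nn[OF n, of x0 x0] pw1[of "norm (\<delta> x0 x0)" n] Nsym by (metis order_trans norm_ge_zero)
        show "N ((T^^n) x0) ((S^^n) (S x0)) \<le> g ^ n * A3" unfolding A3_def
          using Nn[OF n, of x0 "S x0"] pw3[of "norm (\<delta> x0 (S x0))" n] by simp
      qed
      finally show "N ((S^^n) x0) ((S^^Suc n) x0) \<le> (A1 + A3) * g ^ n" by (simp add: algebra_simps)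
    qed (simp_all add: A1_def A3_def)
    obtain u where u: "(\<lambda>n. N ((T^^n) x0) u) \<longlonglongrightarrow> 0" using conv[OF CT] by blast
    obtain v where v: "(\<lambda>n. N ((S^^n) x0) v) \<longlonglongrightarrow> 0" using conv[OF CS] by blast
    have sm: "strict_mono (\<lambda>i::nat. i)" by (simp add: strict_mono_def)
    have Tu: "T u = u"
    proof -
      have a: "(\<lambda>i. N ((T ^^ (i + 1)) x0) (T u)) \<longlonglongrightarrow> 0" using ocT[OF sm] u by simp
      have b: "(\<lambda>i. N ((T ^^ (i + 1)) x0) u) \<longlonglongrightarrow> 0" using LIMSEQ_Suc[OF u] by simp
      show ?thesis using unique[OF a b] .
    qed
    have Sv: "S v = v"
    proof -
      have a: "(\<lambda>i. N ((S ^^ (i + 1)) x0) (S v)) \<longlonglongrightarrow> 0" using ocS[OF sm] v by simp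
      have b: "(\<lambda>i. N ((S ^^ (i + 1)) x0) v) \<longlonglongrightarrow> 0" using LIMSEQ_Suc[OF v] by simp
      show ?thesis using unique[OF a b] .
    qed
    have uv: "u = v"
    proof -
      have "(\<lambda>n. N ((S^^n) x0) u) \<longlonglongrightarrow> 0"
      proof (rule Lim_null_comparison)
        show "\<forall>\<^sub>F n in sequentially. norm (N ((S^^n) x0) u) \<le> N ((T^^n) x0) ((S^^n) x0) + N ((T^^n) x0) u"
          using tri Nsym Nnn by (intro always_eventually allI) (metis abs_of_nonneg real_norm_def)
        show "(\<lambda>n. N ((T^^n) x0) ((S^^n) x0) + N ((T^^n) x0) u) \<longlonglongrightarrow> 0"
          using tendsto_add[OF Nlim u] by simp
      qed
      then show ?thesis using unique[OF _ v] by blast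
    qed
    show "\<exists>!u. T u = u \<and> S u = u"
    proof (rule ex1I[of _ u])
      show "T u = u \<and> S u = u" using Tu Sv uv by simp
      fix w assume w: "T w = w \<and> S w = w"
      have "(\<lambda>n. N ((T^^n) w) ((S^^n) u)) \<longlonglongrightarrow> 0" by (rule Nlim)
      moreover have "(T^^n) w = w" "(S^^n) u = u" for n
        using w Tu Sv uv by (induction n) simp_all
      ultimately have "(\<lambda>n. N w u) \<longlonglongrightarrow> 0" by simp
      then show "w = u" using const0 Nz by blast
    qed
  next
    assume "\<exists>!u. T u = u \<and> S u = u"
    then obtain u where Tu: "T u = u" and Su: "S u = u" by blast
    have Tn: "(T^^n) u = u" for n using Tu by (induction n) simp_all
    have Sn: "(S^^n) u = u" for n using Su by (induction n) simp_all
    have orbT: "(\<lambda>n. N ((T^^n) x) u) \<longlonglongrightarrow> 0" for x using Nlim[of x u] by (simp add: Sn)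
    have orbS: "(\<lambda>n. N ((S^^n) y) u) \<longlonglongrightarrow> 0" for y using Nlim[of u y] by (simp add: Tn Nsym)
    have subs: "strict_mono (\<lambda>i. ns i + 1)" if "strict_mono ns" for ns :: "nat \<Rightarrow> nat"
      using that by (simp add: strict_mono_def)
    have "orbitally_continuous d T"
      unfolding orbitally_continuous_def orbitally_continuous_at_def N_def[symmetric]
    proof (intro allI impI)
      fix v x and ns :: "nat \<Rightarrow> nat"
      assume sm: "strict_mono ns" and lv: "(\<lambda>i. N ((T ^^ ns i) x) v) \<longlonglongrightarrow> 0"
      have lu: "(\<lambda>i. N ((T ^^ ns i) x) u) \<longlonglongrightarrow> 0" using LIMSEQ_subseq_LIMSEQ[OF orbT sm] by (simp add: o_def)
      have "v = u" using unique[OF lv lu] .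
      then show "(\<lambda>i. N ((T ^^ (ns i + 1)) x) (T v)) \<longlonglongrightarrow> 0"
        using LIMSEQ_subseq_LIMSEQ[OF orbT subs[OF sm]] Tu by (simp add: o_def)
    qed
    moreover have "orbitally_continuous d S"
      unfolding orbitally_continuous_def orbitally_continuous_at_def N_def[symmetric]
    proof (intro allI impI)
      fix v x and ns :: "nat \<Rightarrow> nat"
      assume sm: "strict_mono ns" and lv: "(\<lambda>i. N ((S ^^ ns i) x) v) \<longlonglongrightarrow> 0"
      have lu: "(\<lambda>i. N ((S ^^ ns i) x) u) \<longlonglongrightarrow> 0" using LIMSEQ_subseq_LIMSEQ[OF orbS sm] by (simp add: o_def)
      have "v = u" using unique[OF lv lu] .
      then show "(\<lambda>i. N ((S ^^ (ns i + 1)) x) (S v)) \<longlonglongrightarrow> 0"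
        using LIMSEQ_subseq_LIMSEQ[OF orbS subs[OF sm]] Su by (simp add: o_def)
    qed
    ultimately show "orbitally_continuous d T \<and> orbitally_continuous d S" by simp
  qed
qed

end
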